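(* Let $n\ge2$, $s\ge n$ integers, $\Omega>0$, and $y_1,\dots,y_n\in\big[-\frac{(n-1)\pi}{2\Omega},\frac{(n-1)\pi}{2\Omega}\big]$ pairwise distinct; let $a_1,\dots,a_n\in\mathbb C$ with $\min_j|a_j|=m_{\min}>0$. Let $A=\mathrm{diag}(e^{-iy_1\Omega}a_1,\dots,e^{-iy_n\Omega}a_n)$ and $D=(\phi_s(e^{iy_1\Omega/s}),\dots,\phi_s(e^{iy_n\Omega/s}))\in\mathbb C^{(s+1)\times n}$. Let $\sigma_1\ge\dots\ge\sigma_n$ be the $n$ largest singular values of $DAD^T$ (the remaining ones being $0$). Then $$\sigma_n\ge\frac{m_{\min}\,\zeta(n)^2\,\theta_{\min}(\Omega,s)^{2n-2}}{n\,\pi^{2n-2}},\qquad\theta_{\min}(\Omega,s)=\frac{\Omega}{s}\min_{p\ne j}|y_p-y_j|.$$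
   Context: $\phi_s(z)=(1,z,\dots,z^s)^T$; $D^T$ is the (non-conjugate) transpose. For an integer $k\ge1$: $\zeta(k)=\big((\tfrac{k-1}{2})!\big)^2$ if $k$ is odd, $\zeta(k)=(\tfrac{k}{2})!(\tfrac{k-2}{2})!$ if $k$ is even. *)

theory Defs
  imports "Jordan_Normal_Form.Schur_Decomposition" "HOL-Library.Multiset"
begin

definition zeta :: "nat \<Rightarrow> real" where
  "zeta k = (if odd k then (fact ((k - 1) div 2))^2
             else fact (k div 2) * fact ((k - 2) div 2))"

definition singular_values :: "complex mat \<Rightarrow> real list" where
  "singular_values M = rev (sorted_list_of_multiset
     (image_mset (\<lambda>z. sqrt (Re z)) (proots (char_poly (mat_adjoint M * M)))))"

(* k-th largest singular value, 1-based *)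
definition sigma :: "nat \<Rightarrow> complex mat \<Rightarrow> real" where
  "sigma k M = singular_values M ! (k - 1)"

(* phi_s(z) = (1, z, ..., z^s)^T as columns: D = (phi_s(e^{i y_1 Omega/s}),...,phi_s(e^{i y_n Omega/s})) *)
definition Dmat :: "nat \<Rightarrow> nat \<Rightarrow> real \<Rightarrow> (nat \<Rightarrow> real) \<Rightarrow> complex mat" where
  "Dmat s n \<Omega> y = mat (s + 1) n (\<lambda>(k, j). (exp (\<i> * of_real (y j * \<Omega> / real s))) ^ k)"

definition Amat :: "nat \<Rightarrow> real \<Rightarrow> (nat \<Rightarrow> real) \<Rightarrow> (nat \<Rightarrow> complex) \<Rightarrow> complex mat" where
  "Amat n \<Omega> y a = mat n n (\<lambda>(i, j). if i = j then exp (- \<i> * of_real (y i * \<Omega>)) * a i else 0)"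

end

theory Submission
  imports Defs "HOL-Analysis.Convex"
begin


lemma jordan: assumes "0 \<le> t" "t \<le> pi/2" shows "2/pi*t \<le> sin t"
proof -
  have c: "concave_on {0..pi/2} sin"
    by (rule f''_le0_imp_concave[where f'=cos and f''="\<lambda>x. - sin x"])
       (auto intro!: derivative_eq_intros sin_ge_zero)
  define u where "u = 2/pi*t"
  have u: "0 \<le> u" "u \<le> 1" using assms by (auto simp: u_def field_simps)
  have "(1-u) * sin 0 + u * sin (pi/2) \<le> sin ((1-u) *\<^sub>R 0 + u *\<^sub>R (pi/2))"
    using concave_onD[OF c, of u 0 "pi/2"] u by auto
  moreover have "(1-u)*0 + u*(pi/2) = t" by (simp add: u_def)
  ultimately show ?thesis by (simp add: u_def)
qed

interpretation cph: comm_ring_hom "\<lambda>a::complex. [:a:]"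
  by unfold_locales auto

lemma char_poly_XY:
  fixes X Y :: "complex mat"
  assumes X: "X \<in> carrier_mat N n" and Y: "Y \<in> carrier_mat n N" and nN: "n \<le> N"
  shows "char_poly (X * Y) = [:0,1:] ^ (N - n) * char_poly (Y * X)"
proof -
  define x :: "complex poly" where "x = [:0,1:]"
  define Xp where "Xp = map_mat (\<lambda>a. [:a:]) X"
  define Yp where "Yp = map_mat (\<lambda>a. [:a:]) Y"
  have Xp: "Xp \<in> carrier_mat N n" and Yp: "Yp \<in> carrier_mat n N" using X Y by (auto simp: Xp_def Yp_def)
  have cpXY: "char_poly_matrix (X * Y) = x \<cdot>\<^sub>m 1\<^sub>m N - Xp * Yp"
  proof -
    have "map_mat (\<lambda>a. [:a:]) (X * Y) = Xp * Yp" unfolding Xp_def Yp_def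
      by (rule cph.mat_hom_mult[OF X Y])
    hence h: "\<And>i j. i < N \<Longrightarrow> j < N \<Longrightarrow> (Xp * Yp) $$ (i,j) = [:(X * Y) $$ (i,j):]"
      using X Y by (metis (no_types, lifting) carrier_matD index_map_mat index_mult_mat)
    show ?thesis using X Y Xp Yp unfolding char_poly_matrix_def x_def
      by (intro eq_matI) (auto simp: h simp del: index_mult_mat(1))
  qed
  have cpYX: "char_poly_matrix (Y * X) = x \<cdot>\<^sub>m 1\<^sub>m n - Yp * Xp"
  proof -
    have "map_mat (\<lambda>a. [:a:]) (Y * X) = Yp * Xp" unfolding Xp_def Yp_def
      by (rule cph.mat_hom_mult[OF Y X])
    hence h: "\<And>i j. i < n \<Longrightarrow> j < n \<Longrightarrow> (Yp * Xp) $$ (i,j) = [:(Y * X) $$ (i,j):]"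
      using X Y by (metis (no_types, lifting) carrier_matD index_map_mat index_mult_mat)
    show ?thesis using X Y Xp Yp unfolding char_poly_matrix_def x_def
      by (intro eq_matI) (auto simp: h simp del: index_mult_mat(1))
  qed
  define M0 where "M0 = four_block_mat (x \<cdot>\<^sub>m 1\<^sub>m N) Xp Yp (1\<^sub>m n)"
  define L1 where "L1 = four_block_mat (1\<^sub>m N) (0\<^sub>m N n) (- Yp) (x \<cdot>\<^sub>m 1\<^sub>m n)"
  have M0: "M0 \<in> carrier_mat (N+n) (N+n)" using Xp Yp by (auto simp: M0_def)
  have L1: "L1 \<in> carrier_mat (N+n) (N+n)" using Xp Yp by (auto simp: L1_def)
  have dL1: "det L1 = x ^ n" unfolding L1_def
    by (subst det_four_block_mat_upper_right_zero[of _ N _ n]) (use Yp in auto)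
  have b1: "L1 * M0 = four_block_mat (x \<cdot>\<^sub>m 1\<^sub>m N) Xp (0\<^sub>m n N) (x \<cdot>\<^sub>m 1\<^sub>m n - Yp * Xp)"
    unfolding L1_def M0_def
    apply (subst mult_four_block_mat)
    using Xp Yp apply auto
    done
  have "det (L1 * M0) = x ^ N * det (x \<cdot>\<^sub>m 1\<^sub>m n - Yp * Xp)"
    unfolding b1 by (subst det_four_block_mat_lower_left_zero[of _ N _ n]) (use Xp Yp in auto)
  hence e1: "x ^ n * det M0 = x ^ N * char_poly (Y * X)"
    unfolding char_poly_def cpYX using det_mult[OF L1 M0] dL1 by simp
  have b2: "M0 * L1 = four_block_mat (x \<cdot>\<^sub>m 1\<^sub>m N - Xp * Yp) (x \<cdot>\<^sub>m Xp) (0\<^sub>m n N) (x \<cdot>\<^sub>m 1\<^sub>m n)"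
    unfolding L1_def M0_def
    apply (subst mult_four_block_mat)
    using Xp Yp apply auto
    done
  have "det (M0 * L1) = det (x \<cdot>\<^sub>m 1\<^sub>m N - Xp * Yp) * x ^ n"
    unfolding b2 by (subst det_four_block_mat_lower_left_zero[of _ N _ n]) (use Xp Yp in auto)
  hence e2: "x ^ n * det M0 = x ^ n * char_poly (X * Y)"
    unfolding char_poly_def cpXY using det_mult[OF M0 L1] dL1 by (simp add: mult.commute)
  have "x ^ n * char_poly (X * Y) = x ^ n * (x ^ (N - n) * char_poly (Y * X))"
    using e1 e2 nN by (simp add: power_add[symmetric])
  moreover have "x ^ n \<noteq> 0" by (simp add: x_def)
  ultimately show ?thesis unfolding x_def by simp
qed

lemma sorted_nth_ge:
  fixes S :: "real multiset"
  assumes sz: "size (filter_mset (\<lambda>v. c \<le> v) S) \<ge> n" and n: "n \<ge> 1"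
  shows "rev (sorted_list_of_multiset S) ! (n-1) \<ge> c"
proof (rule ccontr)
  define L where "L = rev (sorted_list_of_multiset S)"
  assume "\<not> ?thesis"
  hence lt: "L ! (n-1) < c" by (simp add: L_def)
  have mL: "mset L = S" by (simp add: L_def)
  have srt: "sorted (rev L)" by (simp add: L_def)
  have len: "length L \<ge> n"
  proof -
    have "size (filter_mset (\<lambda>v. c \<le> v) S) \<le> size S" by (rule size_filter_mset_lesseq)
    also have "size S = length L" using mL by (metis size_mset)
    finally show ?thesis using sz by simp
  qed
  have dec: "L ! j \<le> L ! i" if "i \<le> j" "j < length L" for i j
  proof (cases "i = j")
    case False
    have "sorted_wrt (\<ge>) L" using srt by (simp add: sorted_wrt_rev)
    thus ?thesis using that False sorted_wrt_nth_less[of "\<lambda>x y. y \<le> x" L i j] by simp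
  qed simp
  have "filter (\<lambda>v. c \<le> v) (drop (n-1) L) = []"
  proof -
    have "\<forall>v\<in>set (drop (n-1) L). v < c"
    proof
      fix v assume "v \<in> set (drop (n-1) L)"
      then obtain k where k: "k < length L - (n-1)" "v = L ! (n - 1 + k)"
        by (auto simp: in_set_conv_nth)
      have "L ! (n-1+k) \<le> L ! (n-1)" using k len by (intro dec) auto
      with lt k show "v < c" by simp
    qed
    thus ?thesis by (simp add: filter_empty_conv) (meson not_le)
  qed
  hence "length (filter (\<lambda>v. c \<le> v) L) = length (filter (\<lambda>v. c \<le> v) (take (n-1) L))"
    by (metis append_Nil2 append_take_drop_id filter_append)
  also have "\<dots> \<le> n - 1" by (metis length_filter_le length_take min.bounded_iff nle_le)
  finally have "length (filter (\<lambda>v. c \<le> v) L) \<le> n - 1" .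
  moreover have "size (filter_mset (\<lambda>v. c \<le> v) S) = length (filter (\<lambda>v. c \<le> v) L)"
    by (metis mL mset_filter size_mset)
  ultimately show False using sz n by simp
qed

lemma fact_balance:
  fixes a b :: nat
  shows "a \<le> b \<Longrightarrow> fact ((a+b) div 2) * fact ((a+b+1) div 2) \<le> (fact a * fact b :: nat)"
proof (induction "b - a" arbitrary: a b rule: less_induct)
  case less
  show ?case
  proof (cases "b \<le> a + 1")
    case True
    then have "b = a \<or> b = a + 1" using less.prems by auto
    moreover have "(a+a) div 2 = a" "(a+a+1) div 2 = a" "(a+(a+1)) div 2 = a" "(a+(a+1)+1) div 2 = a+1" by simp_all
    ultimately show ?thesis by (elim disjE) (simp_all only: mult.commute le_refl)
  next
    case False
    have IH: "fact ((a+1+(b-1)) div 2) * fact ((a+1+(b-1)+1) div 2) \<le> (fact (a+1) * fact (b-1) :: nat)"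
      using False by (intro less.hyps) auto
    have eq: "a+1+(b-1) = a + b" using False by auto
    have "fact (a+1) * fact (b-1) \<le> (fact a * fact b :: nat)"
    proof -
      have "fact b = b * fact (b-1)" using False by (cases b) auto
      moreover have "fact (a+1) = (a+1) * fact a" by simp
      moreover have "(a+1) * (fact a * fact (b-1)) \<le> b * (fact a * fact (b-1) :: nat)"
        by (rule mult_le_mono1) (use False in simp)
      ultimately show ?thesis by (simp only: mult.assoc mult.left_commute)
    qed
    with IH eq show ?thesis by (metis le_trans)
  qed
qed
lemma zeta_le_fact:
  fixes a b :: nat
  shows "zeta (a+b+1) \<le> fact a * fact b"
proof -
  have key: "zeta (a+b+1) = real (fact ((a+b) div 2) * fact ((a+b+1) div 2))"
  proof (cases "even (a+b)")
    case True
    then obtain m where m: "a + b = 2*m" by (metis evenE)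
    have "odd (a+b+1)" using True by simp
    moreover have "(a+b+1-1) div 2 = m" "(a+b) div 2 = m" "(a+b+1) div 2 = m" using m by simp_all
    ultimately show ?thesis unfolding zeta_def by (simp add: power2_eq_square)
  next
    case False
    then obtain m where m: "a + b = 2*m+1" by (metis oddE)
    have "even (a+b+1)" using False by simp
    moreover have "(a+b+1) div 2 = m+1" "(a+b+1-2) div 2 = m" "(a+b) div 2 = m" using m by simp_all
    ultimately show ?thesis unfolding zeta_def by (simp add: algebra_simps)
  qed
  have "fact ((a+b) div 2) * fact ((a+b+1) div 2) \<le> (fact a * fact b :: nat)"
  proof (cases "a \<le> b")
    case True thus ?thesis by (rule fact_balance)
  next
    case False thus ?thesis using fact_balance[of b a] by (simp add: add.commute mult.commute)
  qed
  hence "real (fact ((a+b) div 2) * fact ((a+b+1) div 2)) \<le> real (fact a * fact b)"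
    by (simp only: of_nat_le_iff)
  thus ?thesis unfolding key by simp
qed

lemma gap_prod:
  fixes S :: "real set" and y0 \<delta> :: real
  assumes "finite S" "\<delta> \<ge> 0" "\<forall>t\<in>S. t - y0 \<ge> \<delta>" "\<forall>t\<in>S. \<forall>u\<in>S. t \<noteq> u \<longrightarrow> \<bar>t-u\<bar> \<ge> \<delta>"
  shows "(\<Prod>t\<in>S. t - y0) \<ge> \<delta>^card S * fact (card S) \<and> (S \<noteq> {} \<longrightarrow> Max S - y0 \<ge> card S * \<delta>)"
  using assms
proof (induction "card S" arbitrary: S)
  case 0
  then show ?case by auto
next
  case (Suc k)
  define m where "m = Max S"
  define S' where "S' = S - {m}"
  have ne: "S \<noteq> {}" using Suc.hyps(2) by auto
  have mS: "m \<in> S" using Suc.prems ne by (simp add: m_def)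
  have cS': "card S' = k" using Suc.hyps(2) mS Suc.prems by (simp add: S'_def)
  have IH: "(\<Prod>t\<in>S'. t - y0) \<ge> \<delta>^k * fact k \<and> (S' \<noteq> {} \<longrightarrow> Max S' - y0 \<ge> k * \<delta>)"
    using Suc.hyps(1)[of S'] cS' Suc.prems by (auto simp: S'_def)
  have mge: "m - y0 \<ge> Suc k * \<delta>"
  proof (cases "S' = {}")
    case True
    then have "k = 0" using cS' by auto
    then show ?thesis using Suc.prems mS by auto
  next
    case False
    have fin: "finite S'" using Suc.prems by (simp add: S'_def)
    have "Max S' \<in> S'" using False fin by simp
    hence M1: "Max S' \<in> S" "Max S' \<noteq> m" by (auto simp: S'_def)
    have "Max S' \<le> m" using M1 Suc.prems by (simp add: m_def)
    hence "m - Max S' \<ge> \<delta>" using Suc.prems(4) M1 mS by force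
    thus ?thesis using IH False by (simp add: algebra_simps)
  qed
  have p0: "(\<Prod>t\<in>S'. t - y0) \<ge> 0" using Suc.prems by (intro prod_nonneg) (auto simp: S'_def)
  have "(\<Prod>t\<in>S. t - y0) = (m - y0) * (\<Prod>t\<in>S'. t - y0)"
    using mS Suc.prems by (simp add: S'_def prod.remove)
  also have "\<dots> \<ge> (Suc k * \<delta>) * (\<delta>^k * fact k)"
  proof (rule mult_mono)
    show "real (Suc k) * \<delta> \<le> m - y0" by (rule mge)
    show "\<delta>^k * fact k \<le> (\<Prod>t\<in>S'. t - y0)" using IH by simp
    show "0 \<le> m - y0" using mge Suc.prems(2) by (smt (verit) of_nat_0_le_iff mult_nonneg_nonneg)
  qed (use Suc.prems(2) in simp)
  finally have "(\<Prod>t\<in>S. t - y0) \<ge> \<delta>^Suc k * fact (Suc k)"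
    by (simp add: algebra_simps)
  moreover have "Max S - y0 \<ge> Suc k * \<delta>" using mge by (simp add: m_def)
  ultimately show ?case using Suc.hyps(2) by simp
qed

lemma gap_prod_idx:
  fixes y :: "nat \<Rightarrow> real" and \<delta> :: real
  assumes inj: "inj_on y {..<n}" and j: "j < n" and d0: "\<delta> \<ge> 0"
    and gap: "\<forall>p<n. \<forall>q<n. p \<noteq> q \<longrightarrow> \<bar>y p - y q\<bar> \<ge> \<delta>"
  shows "(\<Prod>k\<in>{..<n}-{j}. \<bar>y j - y k\<bar>) \<ge> \<delta>^(n-1) * zeta n"
proof -
  define U where "U = {k\<in>{..<n}-{j}. y k > y j}"
  define L where "L = {k\<in>{..<n}-{j}. y k < y j}"
  have ne: "k \<in> {..<n}-{j} \<Longrightarrow> y k \<noteq> y j" for k using inj j by (auto dest: inj_onD)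
  have UL: "{..<n}-{j} = U \<union> L" "U \<inter> L = {}" using ne by (auto simp: U_def L_def) (metis lessThan_iff linorder_neqE_linordered_idom)
  have fU: "finite U" and fL: "finite L" by (auto simp: U_def L_def)
  have cUL: "card U + card L = n - 1"
  proof -
    have "card ({..<n}-{j}) = n - 1" using j by simp
    thus ?thesis using card_Un_disjoint[OF fU fL UL(2)] UL(1) by simp
  qed
  have injU: "inj_on y U" and injL: "inj_on (\<lambda>k. - y k) L"
    using inj by (auto simp: U_def L_def inj_on_def)
  have pU: "(\<Prod>k\<in>U. \<bar>y j - y k\<bar>) = (\<Prod>t\<in>y`U. t - y j)"
    by (subst prod.reindex[OF injU]) (auto simp: U_def intro!: prod.cong)
  have pL: "(\<Prod>k\<in>L. \<bar>y j - y k\<bar>) = (\<Prod>t\<in>(\<lambda>k. - y k)`L. t - (- y j))"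
    by (subst prod.reindex[OF injL]) (auto simp: L_def intro!: prod.cong)
  have gU: "(\<Prod>t\<in>y`U. t - y j) \<ge> \<delta>^card U * fact (card U)"
  proof -
    have "(\<Prod>t\<in>y`U. t - y j) \<ge> \<delta>^card (y`U) * fact (card (y`U))"
    proof -
      have c1: "\<forall>t\<in>y`U. t - y j \<ge> \<delta>"
      proof
        fix t assume "t \<in> y`U"
        then obtain k where k: "k \<in> U" "t = y k" by auto
        hence "\<bar>y k - y j\<bar> \<ge> \<delta>" using gap j unfolding U_def by blast
        thus "t - y j \<ge> \<delta>" using k by (auto simp: U_def)
      qed
      have c2: "\<forall>t\<in>y`U. \<forall>u\<in>y`U. t \<noteq> u \<longrightarrow> \<bar>t-u\<bar> \<ge> \<delta>"
        using gap by (force simp: U_def)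
      show ?thesis using gap_prod[OF _ d0 c1 c2] fU by simp
    qed
    thus ?thesis using card_image[OF injU] by simp
  qed
  have gL: "(\<Prod>t\<in>(\<lambda>k. - y k)`L. t - (- y j)) \<ge> \<delta>^card L * fact (card L)"
  proof -
    have "(\<Prod>t\<in>(\<lambda>k. - y k)`L. t - (- y j)) \<ge> \<delta>^card ((\<lambda>k. - y k)`L) * fact (card ((\<lambda>k. - y k)`L))"
    proof -
      have c1: "\<forall>t\<in>(\<lambda>k. - y k)`L. t - (- y j) \<ge> \<delta>"
      proof
        fix t assume "t \<in> (\<lambda>k. - y k)`L"
        then obtain k where k: "k \<in> L" "t = - y k" by auto
        hence "\<bar>y k - y j\<bar> \<ge> \<delta>" using gap j unfolding L_def by blast
        thus "t - (- y j) \<ge> \<delta>" using k by (auto simp: L_def)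
      qed
      have c2: "\<forall>t\<in>(\<lambda>k. - y k)`L. \<forall>u\<in>(\<lambda>k. - y k)`L. t \<noteq> u \<longrightarrow> \<bar>t-u\<bar> \<ge> \<delta>"
        using gap by (force simp: L_def abs_minus_commute)
      show ?thesis using gap_prod[OF _ d0 c1 c2] fL by simp
    qed
    thus ?thesis using card_image[OF injL] by simp
  qed
  have "(\<Prod>k\<in>{..<n}-{j}. \<bar>y j - y k\<bar>) = (\<Prod>k\<in>U. \<bar>y j - y k\<bar>) * (\<Prod>k\<in>L. \<bar>y j - y k\<bar>)"
    unfolding UL(1) by (rule prod.union_disjoint[OF fU fL UL(2)])
  also have "\<dots> \<ge> (\<delta>^card U * fact (card U)) * (\<delta>^card L * fact (card L))"
  proof -
    have g0: "0 \<le> (\<Prod>t\<in>y`U. t - y j)" using gU d0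
      by (smt (verit) fact_ge_zero mult_nonneg_nonneg zero_le_power)
    show ?thesis unfolding pU pL using gU gL d0 g0 by (intro mult_mono) auto
  qed
  finally have "(\<Prod>k\<in>{..<n}-{j}. \<bar>y j - y k\<bar>) \<ge> \<delta>^(n-1) * (fact (card U) * fact (card L))"
    using cUL by (simp add: power_add[symmetric] algebra_simps)
  moreover have "zeta n \<le> fact (card U) * fact (card L)"
    using zeta_le_fact[of "card U" "card L"] cUL j by simp
  ultimately show ?thesis using d0
    by (smt (verit) mult_left_mono zero_le_power)
qed

lemma l1_prod:
  fixes z :: "nat \<Rightarrow> complex"
  assumes "finite S"
  shows "\<forall>K. (\<Sum>r<K. cmod (coeff (\<Prod>k\<in>S. [:-z k,1:]) r)) \<le> (\<Prod>k\<in>S. 1 + cmod (z k))"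
  using assms
proof (induction S rule: finite_induct)
  case empty
  show ?case
  proof
    fix K :: nat
    show "(\<Sum>r<K. cmod (coeff (\<Prod>k\<in>{}. [:-z k,1:]) r)) \<le> (\<Prod>k\<in>{}. 1 + cmod (z k))"
    proof -
      have "\<And>r. cmod (coeff (1::complex poly) r) = (if r = 0 then 1 else 0)" by simp
      hence "(\<Sum>r<K. cmod (coeff (1::complex poly) r)) = (if 0 \<in> {..<K} then 1 else 0)"
        by (simp only: sum.delta finite_lessThan)
      thus ?thesis by simp
    qed
  qed
next
  case (insert a S)
  define P where "P = (\<Prod>k\<in>S. [:-z k,1:])"
  define B where "B = (\<Prod>k\<in>S. 1 + cmod (z k))"
  have IH: "\<And>K. (\<Sum>r<K. cmod (coeff P r)) \<le> B" using insert.IH by (simp add: P_def B_def)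
  have eq: "(\<Prod>k\<in>insert a S. [:-z k,1:]) = smult (- z a) P + pCons 0 P"
    using insert by (simp add: P_def mult_pCons_left)
  show ?case
  proof
    fix K :: nat
    have "(\<Sum>r<K. cmod (coeff (\<Prod>k\<in>insert a S. [:-z k,1:]) r))
        \<le> (\<Sum>r<K. cmod (z a) * cmod (coeff P r) + cmod (coeff (pCons 0 P) r))"
      unfolding eq
    proof (intro sum_mono)
      fix r
      have "cmod (coeff (pCons 0 P) r - z a * coeff P r) \<le> cmod (coeff (pCons 0 P) r) + cmod (z a * coeff P r)"
        by (rule norm_triangle_ineq4)
      thus "cmod (coeff (smult (- z a) P + pCons 0 P) r) \<le> cmod (z a) * cmod (coeff P r) + cmod (coeff (pCons 0 P) r)"
        by (simp add: norm_mult)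
    qed
    also have "\<dots> = cmod (z a) * (\<Sum>r<K. cmod (coeff P r)) + (\<Sum>r<K. cmod (coeff (pCons 0 P) r))"
      by (simp add: sum.distrib sum_distrib_left)
    also have "(\<Sum>r<K. cmod (coeff (pCons 0 P) r)) \<le> B"
    proof (cases K)
      case 0 thus ?thesis using IH[of 0] by simp
    next
      case (Suc K') thus ?thesis using IH[of K'] by (simp only: sum.lessThan_Suc_shift) simp
    qed
    also have "cmod (z a) * (\<Sum>r<K. cmod (coeff P r)) \<le> cmod (z a) * B"
      using IH by (intro mult_left_mono) auto
    finally show "(\<Sum>r<K. cmod (coeff (\<Prod>k\<in>insert a S. [:-z k,1:]) r)) \<le> (\<Prod>k\<in>insert a S. 1 + cmod (z k))"
      using insert by (simp add: B_def algebra_simps)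
  qed
qed

lemma poly_sum_lt:
  fixes p :: "complex poly"
  assumes "degree p < K"
  shows "poly p x = (\<Sum>r<K. coeff p r * x ^ r)"
proof -
  have "poly p x = (\<Sum>r\<le>degree p. coeff p r * x ^ r)" by (rule poly_altdef)
  also have "\<dots> = (\<Sum>r<K. coeff p r * x ^ r)"
    using assms by (intro sum.mono_neutral_left) (auto simp: coeff_eq_0)
  finally show ?thesis .
qed

lemma vand:
  fixes z x :: "nat \<Rightarrow> complex" and \<kappa> :: real
  assumes nN: "n \<le> N" and z1: "\<forall>k<n. cmod (z k) = 1" and kp: "\<kappa> > 0"
    and pr: "\<forall>j<n. (\<Prod>k\<in>{..<n}-{j}. cmod (z j - z k)) \<ge> 2^(n-1) * \<kappa>"
  shows "\<kappa>^2 * (\<Sum>j<n. cmod (x j)^2) \<le> n * (\<Sum>k<N. cmod (\<Sum>j<n. z j ^ k * x j)^2)"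
proof -
  define b where "b k = (\<Sum>j<n. z j ^ k * x j)" for k
  define B where "B = sqrt (\<Sum>k<N. cmod (b k)^2)"
  have bB: "cmod (b r) \<le> B" if "r < N" for r
  proof -
    have "cmod (b r)^2 \<le> (\<Sum>k<N. cmod (b k)^2)"
      using that by (intro member_le_sum) auto
    thus ?thesis unfolding B_def using real_le_rsqrt by blast
  qed
  have each: "\<kappa>^2 * cmod (x j)^2 \<le> B^2" if j: "j < n" for j
  proof -
    define S where "S = {..<n}-{j}"
    define P where "P = (\<Prod>k\<in>S. [:-z k,1:])"
    have cS: "card S = n - 1" using j by (simp add: S_def)
    have degP: "degree P < n"
    proof -
      have "degree P \<le> (\<Sum>k\<in>S. degree [:-z k,1:])" unfolding P_def
        using degree_prod_sum_le[of S "\<lambda>k. [:-z k,1:]"] by (simp add: S_def o_def)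
      also have "\<dots> = card S" by simp
      finally show ?thesis using cS j by simp
    qed
    have polyP: "poly P w = (\<Prod>k\<in>S. w - z k)" for w
      by (simp add: P_def poly_prod)
    have "(\<Sum>r<n. coeff P r * b r) = (\<Sum>r<n. \<Sum>i<n. coeff P r * (z i ^ r * x i))"
      by (simp add: b_def sum_distrib_left)
    also have "\<dots> = (\<Sum>i<n. \<Sum>r<n. coeff P r * (z i ^ r * x i))" by (rule sum.swap)
    also have "\<dots> = (\<Sum>i<n. x i * (\<Sum>r<n. coeff P r * z i ^ r))"
      by (simp add: sum_distrib_left mult_ac)
    also have "\<dots> = (\<Sum>i<n. x i * poly P (z i))"
      using degP by (simp add: poly_sum_lt[of P n])
    also have "\<dots> = x j * poly P (z j)"
    proof -
      have z0: "\<forall>i\<in>{..<n}-{j}. x i * poly P (z i) = 0"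
      proof
        fix i assume i: "i \<in> {..<n}-{j}"
        have "(\<Prod>k\<in>S. z i - z k) = 0" using i by (intro prod_zero) (auto simp: S_def)
        thus "x i * poly P (z i) = 0" by (simp add: polyP)
      qed
      have "(\<Sum>i<n. x i * poly P (z i)) = x j * poly P (z j) + (\<Sum>i\<in>{..<n}-{j}. x i * poly P (z i))"
        using j by (subst sum.remove[of _ j]) auto
      also have "(\<Sum>i\<in>{..<n}-{j}. x i * poly P (z i)) = 0" using z0 by (rule sum.neutral)
      finally show ?thesis by simp
    qed
    finally have key: "(\<Sum>r<n. coeff P r * b r) = x j * (\<Prod>k\<in>S. z j - z k)" by (simp add: polyP)
    have "cmod (x j) * (\<Prod>k\<in>S. cmod (z j - z k)) = cmod (\<Sum>r<n. coeff P r * b r)"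
      unfolding key by (simp add: norm_mult prod_norm)
    also have "\<dots> \<le> (\<Sum>r<n. cmod (coeff P r) * cmod (b r))"
      by (rule order_trans[OF norm_sum]) (simp add: norm_mult)
    also have "\<dots> \<le> (\<Sum>r<n. cmod (coeff P r) * B)"
      using bB nN by (intro sum_mono mult_left_mono) auto
    also have "\<dots> = (\<Sum>r<n. cmod (coeff P r)) * B" by (simp add: sum_distrib_right)
    also have "\<dots> \<le> 2^(n-1) * B"
    proof (rule mult_right_mono)
      have "(\<Sum>r<n. cmod (coeff P r)) \<le> (\<Prod>k\<in>S. 1 + cmod (z k))"
        using l1_prod[of S z] unfolding P_def S_def by simp
      also have "\<dots> = (\<Prod>k\<in>S. 2)" using z1 by (intro prod.cong) (auto simp: S_def)
      finally show "(\<Sum>r<n. cmod (coeff P r)) \<le> 2^(n-1)" using cS by simp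
    qed (simp add: B_def sum_nonneg)
    finally have A: "cmod (x j) * (\<Prod>k\<in>S. cmod (z j - z k)) \<le> 2^(n-1) * B" .
    have "cmod (x j) * (2^(n-1) * \<kappa>) \<le> cmod (x j) * (\<Prod>k\<in>S. cmod (z j - z k))"
      using pr j by (intro mult_left_mono) (auto simp: S_def)
    moreover have "2^(n-1) * (cmod (x j) * \<kappa>) = cmod (x j) * (2^(n-1) * \<kappa>)" by (simp only: mult_ac)
    ultimately have "2^(n-1) * (cmod (x j) * \<kappa>) \<le> 2^(n-1) * B" using A by linarith
    hence "cmod (x j) * \<kappa> \<le> B" by (rule mult_left_le_imp_le) simp
    moreover have "0 \<le> cmod (x j) * \<kappa>" using kp by simp
    ultimately have "(cmod (x j) * \<kappa>)^2 \<le> B^2" by (rule power_mono)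
    thus ?thesis by (simp add: power_mult_distrib mult.commute)
  qed
  have "\<kappa>^2 * (\<Sum>j<n. cmod (x j)^2) = (\<Sum>j<n. \<kappa>^2 * cmod (x j)^2)" by (simp add: sum_distrib_left)
  also have "\<dots> \<le> (\<Sum>j<n. B^2)" using each by (intro sum_mono) auto
  also have "\<dots> = n * B^2" by simp
  also have "B^2 = (\<Sum>k<N. cmod (b k)^2)" unfolding B_def by (simp add: sum_nonneg)
  finally show ?thesis by (simp add: b_def)
qed

lemma amgm_pt:
  fixes a b s :: real assumes "s > 0"
  shows "a * b \<le> (s * a^2 + b^2 / s) / 2"
proof -
  have "0 \<le> (s * a - b)^2 / s" using assms by simp
  also have "(s * a - b)^2 / s = s * a^2 - 2 * a * b + b^2 / s"
    using assms by (simp add: power2_eq_square field_simps)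
  finally show ?thesis by simp
qed

lemma lemG:
  fixes z x :: "nat \<Rightarrow> complex" and \<sigma> :: real
  assumes sp: "\<sigma> > 0"
    and F1: "\<And>x. \<sigma> * (\<Sum>j<n. cmod (x j)^2) \<le> (\<Sum>k<N. cmod (\<Sum>j<n. z j ^ k * x j)^2)"
  shows "\<sigma> * (\<Sum>l<N. cmod (\<Sum>j<n. z j ^ l * x j)^2)
         \<le> (\<Sum>p<n. cmod (\<Sum>l<N. cnj (z p ^ l) * (\<Sum>j<n. z j ^ l * x j))^2)"
proof -
  define t where "t l = (\<Sum>j<n. z j ^ l * x j)" for l
  define g where "g p = (\<Sum>l<N. cnj (z p ^ l) * t l)" for p
  define T where "T = (\<Sum>l<N. cmod (t l)^2)"
  define G where "G = (\<Sum>p<n. cmod (g p)^2)"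
  define X where "X = (\<Sum>j<n. cmod (x j)^2)"
  have hX: "\<sigma> * X \<le> T" using F1[of x] by (simp add: X_def T_def t_def)
  have "complex_of_real T = (\<Sum>l<N. complex_of_real (cmod (t l)^2))"
    by (simp only: T_def of_real_sum)
  also have "\<dots> = (\<Sum>l<N. cnj (t l) * t l)"
    by (rule sum.cong[OF refl]) (simp only: complex_norm_square mult.commute)
  also have "\<dots> = (\<Sum>l<N. \<Sum>j<n. x j * (z j ^ l * cnj (t l)))"
  proof (rule sum.cong[OF refl])
    fix l
    obtain c where c: "c = cnj (t l)" by simp
    have "c * t l = (\<Sum>j<n. x j * (z j ^ l * c))"
      by (simp add: t_def sum_distrib_left mult_ac)
    thus "cnj (t l) * t l = (\<Sum>j<n. x j * (z j ^ l * cnj (t l)))" using c by simp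
  qed
  also have "\<dots> = (\<Sum>j<n. \<Sum>l<N. x j * (z j ^ l * cnj (t l)))" by (rule sum.swap)
  also have "\<dots> = (\<Sum>j<n. x j * cnj (g j))"
    by (simp add: g_def sum_distrib_left)
  finally have Teq: "complex_of_real T = (\<Sum>j<n. x j * cnj (g j))" .
  have T0: "T \<ge> 0" unfolding T_def by (intro sum_nonneg) simp
  have "T = cmod (complex_of_real T)" using T0 by simp
  also have "\<dots> = cmod (\<Sum>j<n. x j * cnj (g j))" by (simp only: Teq)
  also have "\<dots> \<le> (\<Sum>j<n. cmod (x j) * cmod (g j))"
    by (rule order_trans[OF norm_sum]) (simp add: norm_mult)
  also have "\<dots> \<le> (\<Sum>j<n. (\<sigma> * cmod (x j)^2 + cmod (g j)^2 / \<sigma>) / 2)"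
    using sp by (intro sum_mono amgm_pt)
  also have "\<dots> = (\<Sum>j<n. \<sigma> * cmod (x j)^2 + cmod (g j)^2 / \<sigma>) / 2"
    by (rule sum_divide_distrib[symmetric])
  also have "\<dots> = (\<sigma> * X + G / \<sigma>) / 2"
    by (simp add: X_def G_def sum.distrib sum_distrib_left sum_divide_distrib)
  finally have "T \<le> (\<sigma> * X + G / \<sigma>) / 2" .
  with hX have "T \<le> G / \<sigma>" by simp
  hence "\<sigma> * T \<le> G" using sp by (simp add: field_simps)
  thus ?thesis by (simp add: T_def G_def g_def t_def)
qed

lemma eig_bound:
  fixes z x Ad :: "nat \<Rightarrow> complex" and \<sigma> m :: real
  assumes sp: "\<sigma> > 0" and m0: "m \<ge> 0" and Am: "\<forall>p<n. cmod (Ad p) \<ge> m"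
    and F1: "\<And>x. \<sigma> * (\<Sum>j<n. cmod (x j)^2) \<le> (\<Sum>k<N. cmod (\<Sum>j<n. z j ^ k * x j)^2)"
  shows "(m * \<sigma>)^2 * (\<Sum>l<N. cmod (\<Sum>j<n. z j ^ l * x j)^2)
     \<le> (\<Sum>k<N. cmod (\<Sum>p<n. z p ^ k * (Ad p * (\<Sum>l<N. z p ^ l * cnj (\<Sum>j<n. z j ^ l * x j))))^2)"
proof -
  define t where "t l = (\<Sum>j<n. z j ^ l * x j)" for l
  define u where "u p = (\<Sum>l<N. z p ^ l * cnj (t l))" for p
  have u_eq: "u p = cnj (\<Sum>l<N. cnj (z p ^ l) * t l)" for p by (simp add: u_def)
  have G0: "\<sigma> * (\<Sum>l<N. cmod (t l)^2) \<le> (\<Sum>p<n. cmod (\<Sum>l<N. cnj (z p ^ l) * t l)^2)"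
    unfolding t_def by (rule lemG[OF sp F1])
  have "\<And>p. cmod (u p) = cmod (\<Sum>l<N. cnj (z p ^ l) * t l)" by (simp only: u_eq complex_mod_cnj)
  hence G: "\<sigma> * (\<Sum>l<N. cmod (t l)^2) \<le> (\<Sum>p<n. cmod (u p)^2)" using G0 by simp
  have "(\<Sum>k<N. cmod (\<Sum>p<n. z p ^ k * (Ad p * u p))^2) \<ge> \<sigma> * (\<Sum>p<n. cmod (Ad p * u p)^2)"
    by (rule F1)
  moreover have "(\<Sum>p<n. cmod (Ad p * u p)^2) \<ge> m^2 * (\<Sum>p<n. cmod (u p)^2)"
  proof -
    have "(\<Sum>p<n. cmod (Ad p * u p)^2) \<ge> (\<Sum>p<n. m^2 * cmod (u p)^2)"
      using Am m0 by (intro sum_mono) (auto simp: norm_mult power_mult_distrib intro!: mult_right_mono power_mono)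
    thus ?thesis by (simp add: sum_distrib_left)
  qed
  ultimately have h1: "(\<Sum>k<N. cmod (\<Sum>p<n. z p ^ k * (Ad p * u p))^2) \<ge> \<sigma> * (m^2 * (\<Sum>p<n. cmod (u p)^2))"
    using sp by (smt (verit) mult_left_mono)
  have h2: "\<sigma> * (m^2 * (\<Sum>p<n. cmod (u p)^2)) \<ge> \<sigma> * (m^2 * (\<sigma> * (\<Sum>l<N. cmod (t l)^2)))"
    using G sp by (intro mult_left_mono) auto
  have "(m * \<sigma>)^2 * (\<Sum>l<N. cmod (t l)^2) \<le> (\<Sum>k<N. cmod (\<Sum>p<n. z p ^ k * (Ad p * u p))^2)"
  proof -
    have e: "\<And>T::real. (m * \<sigma>)^2 * T = \<sigma> * (m^2 * (\<sigma> * T))" by (simp add: power2_eq_square)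
    show ?thesis by (rule order_trans[OF eq_refl[OF e] order_trans[OF h2 h1]])
  qed
  thus ?thesis unfolding u_def t_def .
qed

lemma cmod_cis_minus_1: "cmod (cis t - 1) = 2 * \<bar>sin (t/2)\<bar>"
proof -
  have "cmod (cis t - 1) = sqrt ((cos t - 1)^2 + (sin t)^2)"
    by (simp add: cmod_def)
  also have "(cos t - 1)^2 + (sin t)^2 = 4 * (sin (t/2))^2"
  proof -
    have "cos t = 1 - 2 * (sin (t/2))^2" using cos_double_sin[of "t/2"] by simp
    moreover have "(sin t)^2 = 1 - (cos t)^2" by (simp add: sin_squared_eq)
    ultimately show ?thesis by (simp add: power2_eq_square algebra_simps)
  qed
  also have "sqrt (4 * (sin (t/2))^2) = 2 * \<bar>sin (t/2)\<bar>"
    by (simp add: real_sqrt_mult)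
  finally show ?thesis .
qed

lemma exp_diff_bound:
  fixes \<alpha> \<beta> :: real assumes "\<bar>\<alpha> - \<beta>\<bar> \<le> pi"
  shows "cmod (exp (\<i> * of_real \<alpha>) - exp (\<i> * of_real \<beta>)) \<ge> 2/pi * \<bar>\<alpha> - \<beta>\<bar>"
proof -
  define t where "t = \<alpha> - \<beta>"
  have "exp (\<i> * of_real \<alpha>) - exp (\<i> * of_real \<beta>) = cis \<beta> * (cis t - 1)"
    by (simp add: cis_conv_exp t_def algebra_simps exp_add[symmetric] flip: exp_of_real)
  hence e: "cmod (exp (\<i> * of_real \<alpha>) - exp (\<i> * of_real \<beta>)) = 2 * \<bar>sin (t/2)\<bar>"
    by (simp add: norm_mult cmod_cis_minus_1)
  have "\<bar>sin (t/2)\<bar> = sin (\<bar>t\<bar>/2)"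
  proof (cases "t \<ge> 0")
    case True
    thus ?thesis using assms by (simp add: t_def sin_ge_zero)
  next
    case False
    hence "sin (\<bar>t\<bar>/2) = - sin (t/2)" by simp
    moreover have "sin (\<bar>t\<bar>/2) \<ge> 0" using assms by (intro sin_ge_zero) (auto simp: t_def)
    ultimately show ?thesis by simp
  qed
  moreover have "2/pi * (\<bar>t\<bar>/2) \<le> sin (\<bar>t\<bar>/2)"
    using assms by (intro jordan) (auto simp: t_def)
  ultimately show ?thesis using e by (simp add: t_def)
qed




lemma cmod_exp_i: "cmod (exp (\<i> * complex_of_real r)) = 1"
  by (simp add: norm_exp_eq_Re)

lemma mat_adjoint_index:
  fixes M :: "complex mat"
  assumes "i < dim_col M" "k < dim_row M"
  shows "mat_adjoint M $$ (i,k) = cnj (M $$ (k,i))"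
  using assms by (simp add: mat_adjoint_def mat_of_rows_def)

lemma mat_adjoint_dim: "dim_row (mat_adjoint M) = dim_col M" "dim_col (mat_adjoint M) = dim_row M"
  by (simp_all add: mat_adjoint_def mat_of_rows_def)

theorem lemma5p1:
  fixes n s :: nat and \<Omega> :: real and y :: "nat \<Rightarrow> real" and a :: "nat \<Rightarrow> complex"
  assumes "n \<ge> 2" and "s \<ge> n" and "\<Omega> > 0"
    and "\<forall>j<n. \<bar>y j\<bar> \<le> real (n - 1) * pi / (2 * \<Omega>)"
    and "inj_on y {..<n}"
    and "\<forall>j<n. a j \<noteq> 0"
  shows "sigma n (Dmat s n \<Omega> y * Amat n \<Omega> y a * transpose_mat (Dmat s n \<Omega> y))
     \<ge> Min ((\<lambda>j. cmod (a j)) ` {..<n}) * (zeta n)^2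
        * ((\<Omega> / real s) * Min {\<bar>y p - y j\<bar> | p j. p < n \<and> j < n \<and> p \<noteq> j}) ^ (2 * n - 2)
        / (real n * pi ^ (2 * n - 2))"
proof -
  note n2 = assms(1) and sn = assms(2) and Op = assms(3) and yb = assms(4) and inj = assms(5) and a0 = assms(6)
  define N where "N = s + 1"
  define z where "z j = exp (\<i> * of_real (y j * \<Omega> / real s))" for j
  define Ad where "Ad j = exp (- \<i> * of_real (y j * \<Omega>)) * a j" for j
  define D where "D = Dmat s n \<Omega> y"
  define A where "A = Amat n \<Omega> y a"
  define M where "M = D * A * transpose_mat D"
  define m where "m = Min ((\<lambda>j. cmod (a j)) ` {..<n})"
  define \<delta> where "\<delta> = Min {\<bar>y p - y j\<bar> | p j. p < n \<and> j < n \<and> p \<noteq> j}"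
  define \<theta> where "\<theta> = \<Omega> / real s * \<delta>"
  define \<kappa> where "\<kappa> = zeta n * \<theta>^(n-1) / pi^(n-1)"
  define \<sigma> where "\<sigma> = \<kappa>^2 / real n"
  define c where "c = m * \<sigma>"
  have s0: "s > 0" and nN: "n \<le> N" using n2 sn by (auto simp: N_def)
  have rhs: "Min ((\<lambda>j. cmod (a j)) ` {..<n}) * (zeta n)^2
        * ((\<Omega> / real s) * Min {\<bar>y p - y j\<bar> | p j. p < n \<and> j < n \<and> p \<noteq> j}) ^ (2 * n - 2)
        / (real n * pi ^ (2 * n - 2)) = c"
  proof -
    have e: "2 * n - 2 = 2 * (n - 1)" by simp
    show ?thesis unfolding e c_def \<sigma>_def \<kappa>_def \<theta>_def m_def \<delta>_def
      by (simp only: power_even_eq) (simp add: power_divide power_mult_distrib field_simps)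
  qed
  have z1: "cmod (z j) = 1" for j unfolding z_def by (rule cmod_exp_i)
  have Ad_norm: "cmod (Ad j) = cmod (a j)" for j
    unfolding Ad_def using cmod_exp_i[of "- (y j * \<Omega>)"] by (simp add: norm_mult)
  have m_le: "m \<le> cmod (a p)" if "p < n" for p unfolding m_def using that by (intro Min_le) auto
  have m_pos: "m > 0"
  proof -
    have ne: "(\<lambda>j. cmod (a j)) ` {..<n} \<noteq> {}" using n2 by (metis empty_iff image_is_empty lessThan_iff less_le_trans zero_less_numeral)
    have "m \<in> (\<lambda>j. cmod (a j)) ` {..<n}" unfolding m_def by (intro Min_in ne) simp
    thus ?thesis using a0 by auto
  qed
  have \<delta>_le: "\<delta> \<le> \<bar>y p - y q\<bar>" if "p < n" "q < n" "p \<noteq> q" for p q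
  proof -
    have fin: "finite {\<bar>y p - y j\<bar> | p j. p < n \<and> j < n \<and> p \<noteq> j}"
    proof -
      have "{\<bar>y p - y j\<bar> | p j. p < n \<and> j < n \<and> p \<noteq> j} \<subseteq> (\<lambda>(p,j). \<bar>y p - y j\<bar>) ` ({..<n} \<times> {..<n})" by auto
      thus ?thesis by (rule finite_subset) auto
    qed
    show ?thesis unfolding \<delta>_def using that by (intro Min_le[OF fin]) auto
  qed
  have \<delta>_pos: "\<delta> > 0"
  proof -
    have fin: "finite {\<bar>y p - y j\<bar> | p j. p < n \<and> j < n \<and> p \<noteq> j}"
    proof -
      have "{\<bar>y p - y j\<bar> | p j. p < n \<and> j < n \<and> p \<noteq> j} \<subseteq> (\<lambda>(p,j). \<bar>y p - y j\<bar>) ` ({..<n} \<times> {..<n})" by auto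
      thus ?thesis by (rule finite_subset) auto
    qed
    have ne: "{\<bar>y p - y j\<bar> | p j. p < n \<and> j < n \<and> p \<noteq> j} \<noteq> {}"
    proof -
      have "\<bar>y 0 - y 1\<bar> \<in> {\<bar>y p - y j\<bar> | p j. p < n \<and> j < n \<and> p \<noteq> j}" using n2 by force
      thus ?thesis by blast
    qed
    have "\<delta> \<in> {\<bar>y p - y j\<bar> | p j. p < n \<and> j < n \<and> p \<noteq> j}" unfolding \<delta>_def by (rule Min_in[OF fin ne])
    then obtain p q where "p < n" "q < n" "p \<noteq> q" "\<delta> = \<bar>y p - y q\<bar>" by auto
    moreover have "y p \<noteq> y q" using inj calculation by (auto dest: inj_onD)
    ultimately show ?thesis by simp
  qed
  have \<kappa>_pos: "\<kappa> > 0"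
  proof -
    have "zeta n > 0" unfolding zeta_def by simp
    moreover have "\<theta> > 0" using Op s0 \<delta>_pos by (simp add: \<theta>_def)
    ultimately show ?thesis by (simp add: \<kappa>_def)
  qed
  have \<sigma>_pos: "\<sigma> > 0" using \<kappa>_pos n2 by (simp add: \<sigma>_def)
  have c0: "c \<ge> 0" using m_pos \<sigma>_pos by (simp add: c_def)
  have pr: "\<forall>j<n. (\<Prod>k\<in>{..<n}-{j}. cmod (z j - z k)) \<ge> 2^(n-1) * \<kappa>"
  proof (intro allI impI)
    fix j assume j: "j < n"
    define C where "C = 2 * \<Omega> / (pi * real s)"
    have C0: "C \<ge> 0" using Op s0 by (simp add: C_def)
    have fac: "cmod (z j - z k) \<ge> C * \<bar>y j - y k\<bar>" if k: "k < n" for k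
    proof -
      have e1: "\<bar>y j * \<Omega> / real s - y k * \<Omega> / real s\<bar> = \<Omega> / real s * \<bar>y j - y k\<bar>"
      proof -
        have "y j * \<Omega> / real s - y k * \<Omega> / real s = (\<Omega> / real s) * (y j - y k)"
          using s0 by (simp add: field_simps)
        thus ?thesis using Op s0 by (simp add: abs_mult)
      qed
      have "\<bar>y j - y k\<bar> \<le> \<bar>y j\<bar> + \<bar>y k\<bar>" by simp
      also have "\<dots> \<le> 2 * (real (n - 1) * pi / (2 * \<Omega>))" using yb j k by (smt (verit))
      also have "\<dots> = real (n - 1) * pi / \<Omega>" by simp
      finally have h1: "\<bar>y j - y k\<bar> \<le> real (n - 1) * pi / \<Omega>" .
      have "\<Omega> / real s * \<bar>y j - y k\<bar> \<le> \<Omega> / real s * (real (n - 1) * pi / \<Omega>)"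
        using h1 Op s0 by (intro mult_left_mono) auto
      also have "\<dots> = real (n - 1) / real s * pi" using Op by (simp add: field_simps)
      also have "\<dots> \<le> 1 * pi"
        using sn s0 by (intro mult_right_mono) (auto simp: field_simps)
      finally have h2: "\<bar>y j * \<Omega> / real s - y k * \<Omega> / real s\<bar> \<le> pi" using e1 by simp
      have "cmod (z j - z k) \<ge> 2/pi * \<bar>y j * \<Omega> / real s - y k * \<Omega> / real s\<bar>"
        unfolding z_def by (rule exp_diff_bound[OF h2])
      thus ?thesis unfolding e1 C_def by (simp add: field_simps)
    qed
    have cS: "card ({..<n}-{j}) = n - 1" using j by simp
    have "(\<Prod>k\<in>{..<n}-{j}. cmod (z j - z k)) \<ge> (\<Prod>k\<in>{..<n}-{j}. C * \<bar>y j - y k\<bar>)"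
      using fac C0 by (intro prod_mono) auto
    moreover have "(\<Prod>k\<in>{..<n}-{j}. C * \<bar>y j - y k\<bar>) = C^(n-1) * (\<Prod>k\<in>{..<n}-{j}. \<bar>y j - y k\<bar>)"
      using cS by (simp add: prod.distrib)
    moreover have "(\<Prod>k\<in>{..<n}-{j}. \<bar>y j - y k\<bar>) \<ge> \<delta>^(n-1) * zeta n"
      using \<delta>_pos \<delta>_le by (intro gap_prod_idx[OF inj j]) auto
    moreover have "C^(n-1) * (\<delta>^(n-1) * zeta n) = 2^(n-1) * \<kappa>"
      using Op s0 by (simp add: C_def \<kappa>_def \<theta>_def power_mult_distrib power_divide field_simps)
    ultimately show "(\<Prod>k\<in>{..<n}-{j}. cmod (z j - z k)) \<ge> 2^(n-1) * \<kappa>"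
      using C0 by (smt (verit) mult_left_mono zero_le_power)
  qed
  have F1: "\<sigma> * (\<Sum>j<n. cmod (x j)^2) \<le> (\<Sum>k<N. cmod (\<Sum>j<n. z j ^ k * x j)^2)" for x
  proof -
    have "\<kappa>^2 * (\<Sum>j<n. cmod (x j)^2) \<le> n * (\<Sum>k<N. cmod (\<Sum>j<n. z j ^ k * x j)^2)"
      by (rule vand[OF nN _ \<kappa>_pos pr]) (simp add: z1)
    thus ?thesis using n2 by (simp add: \<sigma>_def field_simps)
  qed
  have D: "D \<in> carrier_mat N n" by (simp add: D_def Dmat_def N_def)
  have Dij: "D $$ (k,j) = z j ^ k" if "k < N" "j < n" for k j
    using that by (simp add: D_def Dmat_def N_def z_def)
  have A: "A \<in> carrier_mat n n" by (simp add: A_def Amat_def)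
  have Aij: "A $$ (i,j) = (if i = j then Ad i else 0)" if "i < n" "j < n" for i j
    using that by (simp add: A_def Amat_def Ad_def)
  have M: "M \<in> carrier_mat N N" using D A by (simp add: M_def)
  have DA: "(D * A) $$ (k,p) = z p ^ k * Ad p" if "k < N" "p < n" for k p
  proof -
    have "(D * A) $$ (k,p) = (\<Sum>i\<in>{0..<n}. D $$ (k,i) * A $$ (i,p))"
      using D A that by (simp add: scalar_prod_def)
    also have "\<dots> = (\<Sum>i\<in>{0..<n}. if i = p then z p ^ k * Ad p else 0)"
      by (intro sum.cong) (auto simp: Dij Aij that)
    also have "\<dots> = z p ^ k * Ad p" using that by simp
    finally show ?thesis .
  qed
  have Mkl: "M $$ (k,l) = (\<Sum>p<n. z p ^ k * Ad p * z p ^ l)" if "k < N" "l < N" for k l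
  proof -
    have "M $$ (k,l) = (\<Sum>p\<in>{0..<n}. (D * A) $$ (k,p) * D $$ (l,p))"
      using D A that unfolding M_def by (subst index_mult_mat(1)) (auto simp: scalar_prod_def)
    also have "\<dots> = (\<Sum>p<n. z p ^ k * Ad p * z p ^ l)"
      by (simp only: atLeast0LessThan) (intro sum.cong, auto simp: DA Dij that)
    finally show ?thesis .
  qed
  define X where "X = mat N n (\<lambda>(i,p). cnj (z p ^ i))"
  define Y0 where "Y0 = mat n N (\<lambda>(p,k). cnj (Ad p * z p ^ k))"
  define Y where "Y = Y0 * M"
  define K where "K = Y * X"
  define H where "H = mat_adjoint M * M"
  have X: "X \<in> carrier_mat N n" and Y0: "Y0 \<in> carrier_mat n N" by (simp_all add: X_def Y0_def)
  have Y: "Y \<in> carrier_mat n N" using Y0 M by (simp add: Y_def)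
  have K: "K \<in> carrier_mat n n" using X Y by (simp add: K_def)
  have adj: "mat_adjoint M = X * Y0"
  proof (rule eq_matI)
    show "dim_row (mat_adjoint M) = dim_row (X * Y0)" "dim_col (mat_adjoint M) = dim_col (X * Y0)"
      using M X Y0 by (simp_all add: mat_adjoint_dim)
    fix i k assume ik: "i < dim_row (X * Y0)" "k < dim_col (X * Y0)"
    hence ik': "i < N" "k < N" using X Y0 by auto
    have "mat_adjoint M $$ (i,k) = cnj (M $$ (k,i))"
      using M ik' by (intro mat_adjoint_index) auto
    also have "\<dots> = (\<Sum>p<n. cnj (z p ^ i) * cnj (Ad p * z p ^ k))"
      using ik' by (simp add: Mkl mult_ac)
    also have "\<dots> = (X * Y0) $$ (i,k)"
      using X Y0 ik' by (simp add: X_def Y0_def scalar_prod_def atLeast0LessThan)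
    finally show "mat_adjoint M $$ (i,k) = (X * Y0) $$ (i,k)" .
  qed
  have HXY: "H = X * Y" unfolding H_def adj Y_def using X Y0 M by (simp add: assoc_mult_mat)
  have cpH: "char_poly H = [:0,1:] ^ (N - n) * char_poly K"
    unfolding HXY K_def by (rule char_poly_XY[OF X Y nN])
  have adjM: "mat_adjoint M \<in> carrier_mat N N"
    by (rule carrier_matI) (use M in \<open>simp_all add: mat_adjoint_dim\<close>)
  have root_bound: "Re ev \<ge> c^2" if "poly (char_poly K) ev = 0" for ev
  proof -
    have "eigenvalue K ev" using eigenvalue_root_char_poly[OF K] that by simp
    then obtain v where v: "v \<in> carrier_vec n" "v \<noteq> 0\<^sub>v n" "K *\<^sub>v v = ev \<cdot>\<^sub>v v"
      unfolding eigenvalue_def eigenvector_def using K by auto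
    define x where "x j = cnj (v $ j)" for j
    define t where "t l = (\<Sum>j<n. z j ^ l * x j)" for l
    define w where "w = X *\<^sub>v v"
    have w: "w \<in> carrier_vec N" using X v by (simp add: w_def)
    have wl: "w $ l = cnj (t l)" if "l < N" for l
      using X v that by (simp add: w_def X_def scalar_prod_def t_def x_def atLeast0LessThan)
    have Hw: "H *\<^sub>v w = ev \<cdot>\<^sub>v w"
    proof -
      have "H *\<^sub>v w = X *\<^sub>v (Y *\<^sub>v (X *\<^sub>v v))" using X Y v by (simp add: HXY w_def)
      also have "Y *\<^sub>v (X *\<^sub>v v) = K *\<^sub>v v" using X Y v by (simp add: K_def)
      also have "X *\<^sub>v (K *\<^sub>v v) = ev \<cdot>\<^sub>v w" using X v by (simp add: v(3) w_def mult_mat_vec)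
      finally show ?thesis .
    qed
    define q where "q = M *\<^sub>v w"
    have Hw2: "H *\<^sub>v w = mat_adjoint M *\<^sub>v q" using M w adjM by (simp add: H_def q_def)
    define W where "W = (\<Sum>l<N. cmod (t l)^2)"
    define P where "P = (\<Sum>k<N. cmod (q $ k)^2)"
    have lhs1: "(\<Sum>i<N. cnj (w$i) * (H *\<^sub>v w)$i) = ev * complex_of_real W"
    proof -
      have "(\<Sum>i<N. cnj (w$i) * (H *\<^sub>v w)$i) = ev * (\<Sum>i<N. cnj (w$i) * w$i)"
        using Hw w by (simp add: sum_distrib_left mult_ac)
      also have "(\<Sum>i<N. cnj (w$i) * w$i) = complex_of_real W"
        unfolding W_def of_real_sum
        by (rule sum.cong[OF refl]) (simp only: lessThan_iff wl complex_cnj_cnj complex_norm_square)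
      finally show ?thesis .
    qed
    have lhs2: "(\<Sum>i<N. cnj (w$i) * (H *\<^sub>v w)$i) = complex_of_real P"
    proof -
      have qk: "q $ k = (\<Sum>i<N. M $$ (k,i) * w $ i)" if "k < N" for k
        using M w that by (simp add: q_def scalar_prod_def atLeast0LessThan)
      have "(\<Sum>i<N. cnj (w$i) * (H *\<^sub>v w)$i) = (\<Sum>i<N. cnj (w$i) * (\<Sum>k<N. cnj (M $$ (k,i)) * q $ k))"
        unfolding Hw2 using adjM M
        by (intro sum.cong[OF refl]) (simp add: scalar_prod_def atLeast0LessThan mat_adjoint_index q_def)
      also have "\<dots> = (\<Sum>i<N. \<Sum>k<N. cnj (w$i) * (cnj (M $$ (k,i)) * q $ k))"
        by (simp add: sum_distrib_left)
      also have "\<dots> = (\<Sum>k<N. \<Sum>i<N. cnj (w$i) * (cnj (M $$ (k,i)) * q $ k))"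
        by (rule sum.swap)
      also have "\<dots> = (\<Sum>k<N. q $ k * cnj (\<Sum>i<N. M $$ (k,i) * w $ i))"
        by (simp add: sum_distrib_left mult_ac)
      also have "\<dots> = (\<Sum>k<N. q $ k * cnj (q $ k))"
        by (intro sum.cong[OF refl]) (simp add: qk)
      also have "\<dots> = complex_of_real P"
        unfolding P_def of_real_sum by (rule sum.cong[OF refl]) (simp only: complex_norm_square)
      finally show ?thesis .
    qed
    have qform: "q $ k = (\<Sum>p<n. z p ^ k * (Ad p * (\<Sum>l<N. z p ^ l * cnj (\<Sum>j<n. z j ^ l * x j))))"
      if "k < N" for k
    proof -
      have "q $ k = (\<Sum>l<N. M $$ (k,l) * w $ l)"
        using M w that by (simp add: q_def scalar_prod_def atLeast0LessThan)
      also have "\<dots> = (\<Sum>l<N. \<Sum>p<n. z p ^ k * (Ad p * (z p ^ l * cnj (t l))))"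
        using that by (intro sum.cong[OF refl]) (simp add: Mkl wl sum_distrib_right sum_distrib_left mult_ac)
      also have "\<dots> = (\<Sum>p<n. \<Sum>l<N. z p ^ k * (Ad p * (z p ^ l * cnj (t l))))" by (rule sum.swap)
      also have "\<dots> = (\<Sum>p<n. z p ^ k * (Ad p * (\<Sum>l<N. z p ^ l * cnj (t l))))"
        by (simp add: sum_distrib_left)
      finally show ?thesis by (simp add: t_def)
    qed
    have PW: "(m * \<sigma>)^2 * W \<le> P"
    proof -
      have "(m * \<sigma>)^2 * (\<Sum>l<N. cmod (\<Sum>j<n. z j ^ l * x j)^2)
         \<le> (\<Sum>k<N. cmod (\<Sum>p<n. z p ^ k * (Ad p * (\<Sum>l<N. z p ^ l * cnj (\<Sum>j<n. z j ^ l * x j))))^2)"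
        by (rule eig_bound[OF \<sigma>_pos _ _ F1]) (use m_pos m_le Ad_norm in auto)
      also have "\<dots> = P" unfolding P_def by (intro sum.cong[OF refl]) (simp add: qform)
      finally show ?thesis by (simp add: W_def t_def)
    qed
    have Wpos: "W > 0"
    proof -
      have "\<exists>j. j < n \<and> v $ j \<noteq> 0"
      proof (rule ccontr)
        assume "\<not> (\<exists>j. j < n \<and> v $ j \<noteq> 0)"
        hence "v = 0\<^sub>v n" using v(1) by (intro eq_vecI) auto
        with v(2) show False by simp
      qed
      then obtain j where j: "j < n" "v $ j \<noteq> 0" by blast
      have "0 < cmod (x j)^2" using j by (simp add: x_def)
      also have "\<dots> \<le> (\<Sum>j<n. cmod (x j)^2)" using j by (intro member_le_sum) auto
      finally have "0 < \<sigma> * (\<Sum>j<n. cmod (x j)^2)" using \<sigma>_pos by simp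
      also have "\<dots> \<le> W" unfolding W_def t_def by (rule F1)
      finally show ?thesis .
    qed
    have "ev * complex_of_real W = complex_of_real P" using lhs1 lhs2 by simp
    hence "ev = complex_of_real (P / W)" using Wpos by (simp add: field_simps)
    hence "Re ev = P / W" by simp
    moreover have "c^2 \<le> P / W" using PW Wpos by (simp add: c_def field_simps)
    ultimately show ?thesis by simp
  qed
  have cpK_deg: "degree (char_poly K) = n" and cpK_nz: "char_poly K \<noteq> 0"
    using degree_monic_char_poly[OF K] by auto
  have pw_nz: "([:0,1:] :: complex poly) ^ (N - n) \<noteq> 0" by simp
  have proots_H: "proots (char_poly H) = proots ([:0,1:] ^ (N - n)) + proots (char_poly K)"
    unfolding cpH by (rule proots_mult[OF pw_nz cpK_nz])
  define f :: "complex \<Rightarrow> real" where "f w = sqrt (Re w)" for w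
  have fK: "c \<le> f w" if "w \<in># proots (char_poly K)" for w
  proof -
    have "poly (char_poly K) w = 0" using that cpK_nz by simp
    hence "c^2 \<le> Re w" by (rule root_bound)
    hence "sqrt (c^2) \<le> sqrt (Re w)" by (rule real_sqrt_le_mono)
    thus ?thesis using c0 by (simp add: f_def)
  qed
  have size_ge: "size (filter_mset (\<lambda>v. c \<le> v) (image_mset f (proots (char_poly H)))) \<ge> n"
  proof -
    have "filter_mset (\<lambda>v. c \<le> v) (image_mset f (proots (char_poly K))) = image_mset f (proots (char_poly K))"
      using fK by (auto intro!: filter_mset_eq_conv[THEN iffD2])
    hence "size (filter_mset (\<lambda>v. c \<le> v) (image_mset f (proots (char_poly K)))) = n"
      by (simp add: size_proots_complex cpK_deg)
    moreover have "size (filter_mset (\<lambda>v. c \<le> v) (image_mset f (proots (char_poly K))))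
       \<le> size (filter_mset (\<lambda>v. c \<le> v) (image_mset f (proots (char_poly H))))"
      unfolding proots_H by (simp add: image_mset_union)
    ultimately show ?thesis by simp
  qed
  have "sigma n M \<ge> c"
  proof -
    have fe: "f = (\<lambda>w. sqrt (Re w))" by (simp add: f_def fun_eq_iff)
    show ?thesis using sorted_nth_ge[OF size_ge] n2
      unfolding fe sigma_def singular_values_def H_def[symmetric] by simp
  qed
  thus ?thesis unfolding rhs by (simp add: M_def D_def A_def)
qed


end
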